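(* Let $\mathcal A=\{1,\dots,I\}$ with $I\ge1$, let $d_a\ge1$ be integers for $a\in\mathcal A$ and $d_0,d_\infty\ge0$ integers; let $\hat{\mathcal A}$ be $\mathcal A$ together with $0$ if $d_0>0$ and $\infty$ if $d_\infty>0$; let $x_a,s_a$ ($a\in\mathcal A$) be reals with $0<|x_a|<1$, and set $x_0=1$, $s_0=d_0+1$, $x_\infty=-1$, $s_\infty=-(d_\infty+1)$; set $m=\sum_{a\in\hat{\mathcal A}}d_a+1$, $p_c(t)=\prod_{a\in\hat{\mathcal A}}(1+x_at)^{d_a}$ and, for $c\in(-1,1)$, $$\beta_{r,k}(c)=\int_{-1}^1\Big(\sum_{a\in\hat{\mathcal A}}\frac{x_ad_as_a}{1+x_at}\Big)p_c(t)t^r(ct+1)^k\,dt+\big((-1)^r(1-c)^kp_c(-1)+(1+c)^kp_c(1)\big).$$ Then for any integer $l\ge m$, $$\beta_{0,-l}=\frac{\gamma_0(c)+o(1-c)}{(1-c)^{l-d_0}}=\frac{\gamma_\infty(c)+o(1+c)}{(1+c)^{l-d_\infty}},$$ where $\gamma_0$ and $\gamma_\infty$ are smooth functions defined on open neighbourhoods of $c=1$ and $c=-1$ respectively, with $\gamma_0(1)>0$ and $\gamma_\infty(-1)>0$.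
   Context: Here $o(x)$ denotes a function which is smooth in a neighbourhood of $x=0$ and satisfies $o(0)=0$ (different occurrences may denote different such functions); the equalities hold for $c\in(-1,1)$ near $1$, resp. near $-1$. In the paper these quantities arise from admissible data over a local product of nonnegative CSCK metrics, where $s_a$ is the normalized scalar curvature ($\pm g_a$ has scalar curvature $\pm2d_as_a$) and $x_a$ has the sign of $g_a$. *)

theory Defs
  imports "HOL-Analysis.Analysis"
begin

definition smooth_on :: "real set \<Rightarrow> (real \<Rightarrow> real) \<Rightarrow> bool" where
  "smooth_on S f \<longleftrightarrow> (\<exists>D::nat \<Rightarrow> real \<Rightarrow> real. D 0 = f \<and>
      (\<forall>n. \<forall>x\<in>S. (D n has_real_derivative D (Suc n) x) (at x)))"

datatype hidx = Idx nat | Zero | Infty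

definition hatA :: "nat \<Rightarrow> nat \<Rightarrow> nat \<Rightarrow> hidx set" where
  "hatA I d0 dinf = Idx ` {1..I} \<union> (if d0 > 0 then {Zero} else {})
                      \<union> (if dinf > 0 then {Infty} else {})"

fun xh :: "(nat \<Rightarrow> real) \<Rightarrow> hidx \<Rightarrow> real" where
  "xh x (Idx a) = x a" | "xh x Zero = 1" | "xh x Infty = -1"

fun dh :: "(nat \<Rightarrow> nat) \<Rightarrow> nat \<Rightarrow> nat \<Rightarrow> hidx \<Rightarrow> nat" where
  "dh d d0 dinf (Idx a) = d a" | "dh d d0 dinf Zero = d0" | "dh d d0 dinf Infty = dinf"

fun sh :: "(nat \<Rightarrow> real) \<Rightarrow> nat \<Rightarrow> nat \<Rightarrow> hidx \<Rightarrow> real" where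
  "sh s d0 dinf (Idx a) = s a" | "sh s d0 dinf Zero = real d0 + 1"
| "sh s d0 dinf Infty = - (real dinf + 1)"

definition mdim :: "nat \<Rightarrow> (nat \<Rightarrow> nat) \<Rightarrow> nat \<Rightarrow> nat \<Rightarrow> nat" where
  "mdim I d d0 dinf = (\<Sum>a\<in>hatA I d0 dinf. dh d d0 dinf a) + 1"

definition pc :: "nat \<Rightarrow> (nat \<Rightarrow> nat) \<Rightarrow> nat \<Rightarrow> nat \<Rightarrow> (nat \<Rightarrow> real) \<Rightarrow> real \<Rightarrow> real" where
  "pc I d d0 dinf x t = (\<Prod>a\<in>hatA I d0 dinf. (1 + xh x a * t) ^ dh d d0 dinf a)"

definition beta :: "nat \<Rightarrow> (nat \<Rightarrow> nat) \<Rightarrow> nat \<Rightarrow> nat \<Rightarrow> (nat \<Rightarrow> real) \<Rightarrow> (nat \<Rightarrow> real)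
                     \<Rightarrow> nat \<Rightarrow> int \<Rightarrow> real \<Rightarrow> real" where
  "beta I d d0 dinf x s r k c =
     integral {-1..1} (\<lambda>t. (\<Sum>a\<in>hatA I d0 dinf.
          xh x a * real (dh d d0 dinf a) * sh s d0 dinf a / (1 + xh x a * t))
        * pc I d d0 dinf x t * t ^ r * (c * t + 1) powi k)
     + ((-1) ^ r * (1 - c) powi k * pc I d d0 dinf x (-1) + (1 + c) powi k * pc I d d0 dinf x 1)"

end

theory Submission
  imports Defs "HOL-Complex_Analysis.Cauchy_Integral_Formula" "HOL-Computational_Algebra.Polynomial"
begin
lemma cderiv_real:
  assumes "(H has_field_derivative H') (at (complex_of_real x))"
  shows "((\<lambda>y. Re (H (of_real y))) has_real_derivative Re H') (at x)"
proof -
  have "((\<lambda>y. H (of_real y)) has_derivative (\<lambda>h. H' * of_real h)) (at x)"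
    using has_derivative_compose[OF bounded_linear_imp_has_derivative[OF bounded_linear_of_real]]
      assms unfolding has_field_derivative_def
    by blast
  then have "((\<lambda>y. Re (H (of_real y))) has_derivative (\<lambda>h. Re (H' * of_real h))) (at x)"
    by (rule has_derivative_Re)
  then show ?thesis unfolding has_field_derivative_def
    by (rule has_derivative_eq_rhs) (auto simp: fun_eq_iff)
qed

lemma hol_smooth:
  assumes hol: "G holomorphic_on S" and S: "open S" and U: "open U"
    and US: "\<And>x. x \<in> U \<Longrightarrow> complex_of_real x \<in> S"
    and eq: "\<And>x. x \<in> U \<Longrightarrow> G (of_real x) = of_real (g x)"
  shows "smooth_on U g"
proof -
  define D where "D n = (if n = 0 then g else (\<lambda>x. Re ((deriv ^^ n) G (of_real x))))" for n
  have der: "((\<lambda>y. Re ((deriv ^^ n) G (of_real y))) has_real_derivative Re ((deriv ^^ Suc n) G (of_real x))) (at x)"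
    if "x \<in> U" for n x
  proof -
    have "(deriv ^^ n) G holomorphic_on S" using hol S by (rule holomorphic_higher_deriv)
    then have "((deriv ^^ n) G has_field_derivative deriv ((deriv ^^ n) G) (of_real x)) (at (of_real x))"
      using holomorphic_derivI[OF _ S US[OF that]] by blast
    then show ?thesis by (intro cderiv_real) simp
  qed
  show ?thesis unfolding smooth_on_def
  proof (intro exI[of _ D] conjI ballI allI)
    show "D 0 = g" by (simp add: D_def)
    fix n x assume x: "x \<in> U"
    show "(D n has_real_derivative D (Suc n) x) (at x)"
    proof (cases "n = 0")
      case True
      have "((\<lambda>y. Re ((deriv ^^ 0) G (of_real y))) has_real_derivative D (Suc 0) x) (at x)"
        using der[OF x, of 0] by (simp add: D_def)
      then have "(g has_real_derivative D (Suc 0) x) (at x)"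
        by (rule has_field_derivative_transform_within_open[OF _ U x]) (simp add: eq)
      then show ?thesis using True by (simp add: D_def)
    next
      case False
      then show ?thesis using der[OF x, of n] by (simp add: D_def)
    qed
  qed
qed

lemma smooth_neg:
  assumes "smooth_on U g"
  shows "smooth_on (uminus ` U) (\<lambda>x. g (- x))"
proof -
  obtain D where D0: "D 0 = g" and D: "\<And>n x. x \<in> U \<Longrightarrow> (D n has_real_derivative D (Suc n) x) (at x)"
    using assms unfolding smooth_on_def by blast
  define E where "E n = (\<lambda>x. (-1)^n * D n (- x))" for n
  show ?thesis unfolding smooth_on_def
  proof (intro exI[of _ E] conjI ballI allI)
    show "E 0 = (\<lambda>x. g (- x))" by (simp add: E_def D0)
    fix n x assume "x \<in> uminus ` U"
    then have "- x \<in> U" by auto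
    from D[OF this, of n] have "((\<lambda>x. D n (- x)) has_real_derivative D (Suc n) (- x) * (-1)) (at x)"
      by (rule DERIV_chain2[of "D n"]) (auto intro!: derivative_eq_intros)
    then show "(E n has_real_derivative E (Suc n) x) (at x)"
      unfolding E_def by (auto intro!: derivative_eq_intros)
  qed
qed

lemma smooth_zero: "smooth_on U (\<lambda>x. 0)"
  unfolding smooth_on_def by (intro exI[of _ "\<lambda>n x. 0"]) auto

lemma dinv:
  fixes c t :: real
  assumes nz: "c*t+1 \<noteq> 0"
  shows "((\<lambda>t. -1/(c*t+1)^(Suc M)) has_real_derivative real (Suc M)*c/(c*t+1)^(Suc (Suc M))) (at t)"
proof -
  have d1: "((\<lambda>t. c*t+1) has_real_derivative c) (at t)" by (auto intro!: derivative_eq_intros)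
  have d2: "((\<lambda>t. (c*t+1)^(Suc M)) has_real_derivative (1 + of_nat M) * (c * (c*t+1)^M)) (at t)"
    by (rule DERIV_power_Suc[OF d1])
  have d3: "((\<lambda>t. inverse ((c*t+1)^(Suc M))) has_real_derivative
      - ((1 + of_nat M) * (c * (c*t+1)^M) * inverse (((c*t+1)^(Suc M)) ^ Suc (Suc 0)))) (at t)"
    by (rule DERIV_inverse_fun[OF d2]) (use nz in simp)
  have d4: "((\<lambda>t. -1/(c*t+1)^(Suc M)) has_real_derivative
      ((1 + of_nat M) * (c * (c*t+1)^M) * inverse (((c*t+1)^(Suc M)) ^ Suc (Suc 0)))) (at t)"
    using DERIV_minus[OF d3] by (simp add: divide_inverse)
  define u where "u = c*t+1"
  define U where "U = u^M"
  have uU: "u \<noteq> 0" "U \<noteq> 0" using nz unfolding u_def U_def by auto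
  have "(1 + of_nat M) * (c * (c*t+1)^M) * inverse (((c*t+1)^(Suc M)) ^ Suc (Suc 0))
     = (1 + of_nat M) * (c * U) * inverse ((u*U) ^ Suc (Suc 0))" unfolding u_def U_def by simp
  also have "\<dots> = real (Suc M)*c/(u*(u*U))" using uU by (simp add: field_simps)
  also have "\<dots> = real (Suc M)*c/(c*t+1)^(Suc (Suc M))" unfolding u_def U_def by simp
  finally show ?thesis using d4 by simp
qed
lemma facid: "\<lbrakk>(0::real) < p; 0 < a\<rbrakk>
     \<Longrightarrow> fact h / (a*p) - fact h / ((a+1+h)*p) = fact (Suc h) / (a * ((a+1+h)*p))"
proof -
  assume p: "0 < p" and a: "0<a"
  have gen: "F/(a*p) - F/(q*p) = F*(q-a)/(a*(q*p))" if "q \<noteq> 0" for F q :: real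
    using p a that by (simp add: field_simps)
  have q: "a+1+h \<noteq> 0" using a by simp
  have "fact h / (a*p) - fact h / ((a+1+h)*p) = fact h * ((a+1+h) - a) / (a*((a+1+h)*p))"
    by (rule gen[OF q])
  also have "\<dots> = fact (Suc h) / (a * ((a+1+h)*p))" by (simp add: algebra_simps)
  finally show ?thesis .
qed

lemma pascal_sum:
  fixes g :: "nat \<Rightarrow> real"
  shows "(\<Sum>k\<le>Suc h. of_nat (Suc h choose k) * g k)
       = (\<Sum>k\<le>h. of_nat (h choose k) * g k) + (\<Sum>k\<le>h. of_nat (h choose k) * g (Suc k))"
proof -
  have "(\<Sum>k\<le>Suc h. of_nat (Suc h choose k) * g k)
      = g 0 + (\<Sum>k\<le>h. of_nat (Suc h choose Suc k) * g (Suc k))"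
    by (subst sum.atMost_Suc_shift) simp
  also have "\<dots> = g 0 + (\<Sum>k\<le>h. of_nat (h choose Suc k) * g (Suc k)) + (\<Sum>k\<le>h. of_nat (h choose k) * g (Suc k))"
    by (simp add: sum.distrib algebra_simps)
  also have "g 0 + (\<Sum>k\<le>h. of_nat (h choose Suc k) * g (Suc k)) = (\<Sum>k\<le>Suc h. of_nat (h choose k) * g k)"
    by (subst sum.atMost_Suc_shift) simp
  also have "\<dots> = (\<Sum>k\<le>h. of_nat (h choose k) * g k)"
    by simp
  finally show ?thesis .
qed

lemma altsum:
  fixes a :: real
  assumes "a > 0"
  shows "(\<Sum>k\<le>h. of_nat (h choose k) * ((-1)^k / (a + of_nat k))) = fact h / pochhammer a (Suc h)"
  using assms
proof (induction h arbitrary: a)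
  case 0
  then show ?case by simp
next
  case (Suc h)
  have "(\<Sum>k\<le>Suc h. of_nat (Suc h choose k) * ((-1)^k / (a + of_nat k)))
     = (\<Sum>k\<le>h. of_nat (h choose k) * ((-1)^k / (a + of_nat k)))
       - (\<Sum>k\<le>h. of_nat (h choose k) * ((-1)^k / ((a + 1) + of_nat k)))"
    by (subst pascal_sum) (simp add: sum_negf algebra_simps)
  also have "\<dots> = fact h / pochhammer a (Suc h) - fact h / pochhammer (a+1) (Suc h)"
    using Suc by simp
  also have "\<dots> = fact (Suc h) / pochhammer a (Suc (Suc h))"
  proof -
    define p where "p = pochhammer (a+1) h"
    have p: "p > 0" unfolding p_def using Suc.prems by (intro pochhammer_pos) simp
    have e1: "pochhammer a (Suc h) = a * p" by (simp add: pochhammer_rec p_def)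
    have e2: "pochhammer (a+1) (Suc h) = (a + 1 + of_nat h) * p" by (simp add: pochhammer_rec' p_def)
    have e3: "pochhammer a (Suc (Suc h)) = a * ((a + 1 + of_nat h) * p)"
      by (subst pochhammer_rec) (simp add: e2)
    show ?thesis unfolding e1 e2 e3 using facid[OF p Suc.prems] .
  qed
  finally show ?case .
qed

lemma Kpos:
  assumes "h + 2 \<le> l"
  shows "(\<Sum>i\<le>h. real (h choose i) * (-1)^i / real (l - 1 - h + i)) > 0"
proof -
  have a: "real (l - 1 - h) > 0" using assms by simp
  have "(\<Sum>i\<le>h. real (h choose i) * (-1)^i / real (l - 1 - h + i))
      = (\<Sum>i\<le>h. of_nat (h choose i) * ((-1)^i / (real (l - 1 - h) + of_nat i)))"
    by simp
  also have "\<dots> = fact h / pochhammer (real (l - 1 - h)) (Suc h)" using altsum[OF a] .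
  also have "\<dots> > 0" using a by (intro divide_pos_pos pochhammer_pos) auto
  finally show ?thesis .
qed

lemma mono_int:
  fixes c :: real
  assumes c: "0 < c" "c < 1" and jl: "j + 2 \<le> l"
  shows "((\<lambda>t. (1+t)^j * (c*t+1) powi (-int l)) has_integral
     (\<Sum>i\<le>j. of_nat (j choose i) * (-(1-c))^i / (c^(j+1) * real (l-1-j+i))
          * (1/(1-c)^(l-1-j+i) - 1/(1+c)^(l-1-j+i)))) {-1..1}"
proof -
  define F where "F t = (\<Sum>i\<le>j. of_nat (j choose i) * (-(1-c))^i / (c^(j+1) * real (l-1-j+i))
          * (- 1/(c*t+1)^(l-1-j+i)))" for t
  have pos: "c*t+1 > 0" if "t \<in> {-1..1}" for t
  proof -
    have "c * t \<ge> - c" using that c mult_left_mono[of "-1" t c] by simp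
    then show ?thesis using c by simp
  qed
  have der: "(F has_real_derivative (1+t)^j * (c*t+1) powi (-int l)) (at t)" if t: "t \<in> {-1..1}" for t
  proof -
    have nz: "c*t+1 \<noteq> 0" using pos[OF t] by simp
    have "(F has_real_derivative (\<Sum>i\<le>j. of_nat (j choose i) * (-(1-c))^i / (c^(j+1) * real (l-1-j+i))
          * (real (l-1-j+i) * c / (c*t+1)^(l-j+i)))) (at t)"
      unfolding F_def
    proof (intro DERIV_sum DERIV_cmult)
      fix i assume "i \<in> {..j}"
      then have N: "l-1-j+i \<noteq> 0" "l-j+i = Suc (l-1-j+i)" using jl by auto
      obtain M where M: "l - 1 - j + i = Suc M" using N(1) by (cases "l - 1 - j + i") auto
      show "((\<lambda>t. - 1 / (c * t + 1) ^ (l - 1 - j + i)) has_real_derivative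
             real (l - 1 - j + i) * c / (c * t + 1) ^ (l - j + i)) (at t)"
        unfolding N(2) M using dinv[OF nz] by simp
    qed
    also have "(\<Sum>i\<le>j. of_nat (j choose i) * (-(1-c))^i / (c^(j+1) * real (l-1-j+i))
          * (real (l-1-j+i) * c / (c*t+1)^(l-j+i)))
        = (\<Sum>i\<le>j. of_nat (j choose i) * (-(1-c))^i * (c*t+1)^(j-i)) / (c^j * (c*t+1)^l)"
      unfolding sum_divide_distrib
    proof (intro sum.cong refl)
      fix i assume "i \<in> {..j}"
      then have N: "l-1-j+i \<noteq> 0" "l = (l-j+i) + (j - i)" using jl by auto
      have L: "(c*t+1)^l = (c*t+1)^(l-j+i) * (c*t+1)^(j-i)" by (subst N(2)) (simp add: power_add)
      have gen: "k/(c^(j+1)*N)*(N*c/A) = k*Bp/(c^j*(A*Bp))"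
        if "N\<noteq>0" "A\<noteq>0" "Bp\<noteq>0" for k N A Bp :: real
        using that c by (simp add: field_simps)
      show "of_nat (j choose i) * (-(1-c))^i / (c^(j+1) * real (l-1-j+i))
          * (real (l-1-j+i) * c / (c*t+1)^(l-j+i))
          = of_nat (j choose i) * (-(1-c))^i * (c*t+1)^(j-i) / (c^j * (c*t+1)^l)"
        unfolding L by (rule gen) (use N(1) nz in auto)
    qed
    also have "(\<Sum>i\<le>j. of_nat (j choose i) * (-(1-c))^i * (c*t+1)^(j-i)) = (c*(1+t))^j"
      by (subst binomial_ring[symmetric]) (simp add: algebra_simps)
    also have "(c*(1+t))^j / (c^j * (c*t+1)^l) = (1+t)^j * (c*t+1) powi (-int l)"
      using c nz by (simp add: power_int_minus_divide power_mult_distrib)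
    finally show ?thesis .
  qed
  have "((\<lambda>t. (1+t)^j * (c*t+1) powi (-int l)) has_integral (F 1 - F (-1))) {-1..1}"
    by (intro fundamental_theorem_of_calculus)
      (auto intro!: has_field_derivative_at_within der simp: has_real_derivative_iff_has_vector_derivative[symmetric])
  also have "F 1 - F (-1) = (\<Sum>i\<le>j. of_nat (j choose i) * (-(1-c))^i / (c^(j+1) * real (l-1-j+i))
          * (1/(1-c)^(l-1-j+i) - 1/(1+c)^(l-1-j+i)))"
    unfolding F_def sum_subtractf[symmetric]
  proof (intro sum.cong refl)
    fix i
    have gen: "k*(-1/X) - k*(-1/Y) = k*(1/Y - 1/X)" for k X Y :: real by (simp add: algebra_simps)
    have e: "c*1+1 = 1+c" "c*(-1)+1 = 1-c" by simp_all
    show "of_nat (j choose i) * (-(1-c))^i / (c^(j+1) * real (l-1-j+i)) * (- 1 / (c * 1 + 1) ^ (l - 1 - j + i)) -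
         of_nat (j choose i) * (-(1-c))^i / (c^(j+1) * real (l-1-j+i)) * (- 1 / (c * - 1 + 1) ^ (l - 1 - j + i)) =
         of_nat (j choose i) * (-(1-c))^i / (c^(j+1) * real (l-1-j+i))
          * (1/(1-c)^(l-1-j+i) - 1/(1+c)^(l-1-j+i))"
      unfolding gen e by simp
  qed
  finally show ?thesis .
qed


definition kap :: "real poly \<Rightarrow> nat \<Rightarrow> nat \<Rightarrow> nat \<Rightarrow> nat \<Rightarrow> real" where
  "kap R l e k i = coeff (pcompose R [:-1,1:]) k * real ((k+(e-1)) choose i) * (-1)^i / real (l-1-(k+(e-1))+i)"

definition gf :: "real poly \<Rightarrow> nat \<Rightarrow> nat \<Rightarrow> real \<Rightarrow> real \<Rightarrow> 'a::real_normed_field \<Rightarrow> 'a" where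
  "gf R l e B C z = (\<Sum>k\<le>degree R. \<Sum>i\<le>k+(e-1). of_real (kap R l e k i) *
      ((1-z)^(k+(e-1)+1-e) - (1-z)^(l-e)*(1-z)^i/(1+z)^(l-1-(k+(e-1))+i)) / z^(k+(e-1)+1))
     + of_real B + (1-z)^(l-e) * of_real C / (1+z)^l"

lemma gf_hol: "gf R l e B C holomorphic_on (-{0, -1::complex})"
  unfolding gf_def[abs_def]
  by (intro holomorphic_intros) (auto simp: add_eq_0_iff)

lemma gf_real: "gf R l e B C (complex_of_real c) = complex_of_real (gf R l e B C c)"
  unfolding gf_def by simp

lemma term_id:
  fixes c q :: real
  assumes c: "0<c" "c<1" and j: "e \<le> j+1" "j+2 \<le> l" "i \<le> j"
  shows "q * (of_nat (j choose i) * (-(1-c))^i / (c^(j+1) * real (l-1-j+i)) * (1/(1-c)^(l-1-j+i) - 1/(1+c)^(l-1-j+i)))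
    = (q * real (j choose i) * (-1)^i / real (l-1-j+i)) * ((1-c)^(j+1-e) - (1-c)^(l-e)*(1-c)^i/(1+c)^(l-1-j+i)) / c^(j+1) / (1-c)^(l-e)"
proof -
  define eps where "eps = 1 - c"
  have ep: "eps > 0" using c by (simp add: eps_def)
  have ex: "i + (l - e) = (j+1-e) + (l-1-j+i)" using j by simp
  have ab: "eps^i * eps^(l-e) = eps^(j+1-e) * eps^(l-1-j+i)"
    by (simp only: power_add[symmetric] ex)
  have m: "(-eps)^i = (-1)^i * eps^i" by (rule power_minus)
  have gen: "q * (Cb * (s * a) / (c' * N) * (1/E - 1/F)) = (q * Cb * s / N) * (d - b * a / F) / c' / b"
    if "a * b = d * E" "a \<noteq> 0" "b \<noteq> 0" "E \<noteq> 0" "F \<noteq> 0" "c' \<noteq> 0" "N \<noteq> 0"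
    for Cb s a c' N E F d b :: real
  proof -
    have d: "d / b = a / E" using that by (simp add: field_simps)
    have "(d - b * a / F) / b = a * (1/E - 1/F)" using that
      by (simp add: diff_divide_distrib d right_diff_distrib)
    then have "(q * Cb * s / N) * (d - b * a / F) / c' / b = (q * Cb * s / N) * (a * (1/E - 1/F)) / c'"
      by (metis times_divide_eq_right divide_divide_eq_left mult.commute)
    then show ?thesis by (simp add: mult.commute mult.left_commute)
  qed
  have cp: "1 + c > 0" using c by simp
  show ?thesis unfolding eps_def[symmetric] m
    apply (rule gen[OF ab])
    using ep c cp j by simp_all
qed


lemma core:
  fixes R :: "real poly" and l e :: nat and B C :: real
  assumes deg: "degree R + (e - 1) + 2 \<le> l" and el: "e < l"
    and B0: "e = 0 \<Longrightarrow> B > 0" and B1: "0 < e \<Longrightarrow> B = 0" and Rpos: "0 < e \<Longrightarrow> poly R (-1) > 0"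
  shows "\<exists>g U. open U \<and> 1 \<in> U \<and> smooth_on U g \<and> g 1 > 0 \<and> (\<forall>c. 0 < c \<and> c < 1 \<longrightarrow>
     integral {-1..1} (\<lambda>t. (1+t)^(e-1) * poly R t * (c*t+1) powi (-int l))
       + ((1-c) powi (-int l) * B + (1+c) powi (-int l) * C) = g c / (1-c)^(l-e))"
proof -
  define h where "h = e - 1"
  define Q where "Q = pcompose R [:-1,1:]"
  define n where "n = degree R"
  have degQ: "degree Q = n" unfolding Q_def n_def by (simp add: degree_pcompose)
  define g where "g = (gf R l e B C :: real \<Rightarrow> real)"
  define U where "U = {0::real<..}"
  have oU: "open U" unfolding U_def by simp
  have U1: "1 \<in> U" unfolding U_def by simp
  have inU: "complex_of_real x \<in> -{0, -1}" if "x \<in> U" for x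
  proof -
    have "x > 0" using that unfolding U_def by simp
    then have "complex_of_real x \<noteq> 0" "complex_of_real x \<noteq> -1"
      by (metis of_real_eq_0_iff less_irrefl, metis of_real_eq_iff of_real_minus of_real_1 neg_0_less_iff_less zero_less_one less_asym)
    then show ?thesis by simp
  qed
  have sm: "smooth_on U g"
    by (rule hol_smooth[OF gf_hol _ oU inU]) (auto simp: g_def gf_real)
  have g1: "g 1 > 0"
  proof (cases "e = 0")
    case True
    have "g 1 = B" unfolding g_def gf_def using el True by (simp add: power_0_left)
    then show ?thesis using B0 True by simp
  next
    case False
    have he: "h + 1 - e = 0" "e - 1 = h" unfolding h_def using False by auto
    have le: "l - e \<noteq> 0" using el by simp
    have "g 1 = (\<Sum>k\<le>n. \<Sum>i\<le>k+h. kap R l e k i * 0^k)"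
      unfolding g_def gf_def n_def using le False B1 he by (simp add: h_def power_0_left)
    also have "\<dots> = (\<Sum>i\<le>h. kap R l e 0 i)"
      by (subst sum.remove[of _ 0]) (auto intro!: sum.neutral)
    also have "\<dots> = poly R (-1) * (\<Sum>i\<le>h. real (h choose i) * (-1)^i / real (l - 1 - h + i))"
      unfolding kap_def sum_distrib_left he(2) Q_def[symmetric]
      by (intro sum.cong refl) (simp add: Q_def poly_0_coeff_0[symmetric] poly_pcompose)
    also have "\<dots> > 0" using Rpos False Kpos[of h l] deg unfolding h_def by simp
    finally show ?thesis .
  qed
  show ?thesis
  proof (intro exI[of _ g] exI[of _ U] conjI allI impI oU U1 sm g1)
    fix c :: real assume c: "0 < c \<and> c < 1"
    have poly_exp: "(1+t)^(e-1) * poly R t * (c*t+1) powi (-int l)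
        = (\<Sum>k\<le>n. coeff Q k * ((1+t)^(k+h) * (c*t+1) powi (-int l)))" for t
    proof -
      have "poly R t = poly Q (1+t)" unfolding Q_def by (simp add: poly_pcompose)
      also have "\<dots> = (\<Sum>k\<le>n. coeff Q k * (1+t)^k)" by (simp add: poly_altdef degQ)
      finally show ?thesis
        by (simp add: h_def sum_distrib_left sum_distrib_right power_add algebra_simps)
    qed
    define I where "I = (\<Sum>k\<le>n. coeff Q k * (\<Sum>i\<le>k+h. of_nat ((k+h) choose i) * (-(1-c))^i / (c^(k+h+1) * real (l-1-(k+h)+i))
          * (1/(1-c)^(l-1-(k+h)+i) - 1/(1+c)^(l-1-(k+h)+i))))"
    have "((\<lambda>t. (1+t)^(e-1) * poly R t * (c*t+1) powi (-int l)) has_integral I) {-1..1}"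
      unfolding poly_exp I_def
      by (intro has_integral_sum has_integral_mult_right mono_int) (use c deg in \<open>auto simp: n_def h_def\<close>)
    then have int: "integral {-1..1} (\<lambda>t. (1+t)^(e-1) * poly R t * (c*t+1) powi (-int l)) = I"
      by (rule integral_unique)
    have ep: "1 - c > 0" "1 + c > 0" using c by auto
    have bnd: "(1-c) powi (-int l) * B + (1+c) powi (-int l) * C = (B + (1-c)^(l-e) * C / (1+c)^l) / (1-c)^(l-e)"
    proof (cases "e = 0")
      case True
      then show ?thesis using ep by (simp add: power_int_minus_divide field_simps)
    next
      case False
      then show ?thesis using ep B1 by (simp add: power_int_minus_divide field_simps)
    qed
    have Ieq: "I = (\<Sum>k\<le>n. \<Sum>i\<le>k+h. kap R l e k i *
      ((1-c)^(k+h+1-e) - (1-c)^(l-e)*(1-c)^i/(1+c)^(l-1-(k+h)+i)) / c^(k+h+1)) / (1-c)^(l-e)"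
      unfolding I_def sum_divide_distrib sum_distrib_left
    proof (intro sum.cong refl)
      fix k i assume k: "k \<in> {..n}" and i: "i \<in> {..k+h}"
      show "coeff Q k * (of_nat ((k+h) choose i) * (-(1-c))^i / (c^(k+h+1) * real (l-1-(k+h)+i))
          * (1/(1-c)^(l-1-(k+h)+i) - 1/(1+c)^(l-1-(k+h)+i)))
        = kap R l e k i * ((1-c)^(k+h+1-e) - (1-c)^(l-e)*(1-c)^i/(1+c)^(l-1-(k+h)+i)) / c^(k+h+1) / (1-c)^(l-e)"
        unfolding kap_def Q_def[symmetric] h_def[symmetric]
        by (rule term_id) (use c k i deg in \<open>auto simp: h_def n_def\<close>)
    qed
    show "integral {-1..1} (\<lambda>t. (1+t)^(e-1) * poly R t * (c*t+1) powi (-int l))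
       + ((1-c) powi (-int l) * B + (1+c) powi (-int l) * C) = g c / (1-c)^(l-e)"
      unfolding int bnd Ieq
      unfolding g_def gf_def n_def[symmetric] h_def[symmetric]
      by (simp add: add_divide_distrib)
  qed
qed


definition Pp :: "hidx set \<Rightarrow> (hidx \<Rightarrow> real) \<Rightarrow> (hidx \<Rightarrow> nat) \<Rightarrow> (hidx \<Rightarrow> real) \<Rightarrow> real poly" where
  "Pp A X D S = (\<Sum>a\<in>A. smult (X a * real (D a) * S a) ([:1, X a:]^(D a - 1) * (\<Prod>b\<in>A-{a}. [:1, X b:]^(D b))))"

lemma pl: "poly [:1, y:] t = 1 + y * (t::real)" by simp

lemma P_eval:
  assumes fin: "finite A" and D: "\<forall>a\<in>A. D a \<ge> 1" and nz: "\<forall>a\<in>A. 1 + X a * t \<noteq> 0"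
  shows "(\<Sum>a\<in>A. X a * real (D a) * S a / (1 + X a * t)) * (\<Prod>a\<in>A. (1 + X a * t)^(D a))
       = poly (Pp A X D S) t"
  unfolding Pp_def poly_sum sum_distrib_right
proof (intro sum.cong refl)
  fix a assume a: "a \<in> A"
  obtain m where m: "D a = Suc m" using D a by (cases "D a") auto
  have pr: "(\<Prod>b\<in>A. (1 + X b * t)^(D b)) = (1 + X a * t)^(D a) * (\<Prod>b\<in>A-{a}. (1 + X b * t)^(D b))"
    using fin a by (simp add: prod.remove)
  have u: "1 + X a * t \<noteq> 0" using nz a by auto
  have gen: "k/u * (u^(Suc m) * P) = k * (u^m * P)" if "u \<noteq> 0" for k u P :: real
    using that by (simp add: field_simps)
  show "X a * real (D a) * S a / (1 + X a * t) * (\<Prod>b\<in>A. (1 + X b * t)^(D b))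
      = poly (smult (X a * real (D a) * S a) ([:1, X a:]^(D a - 1) * (\<Prod>b\<in>A-{a}. [:1, X b:]^(D b)))) t"
    unfolding pr m
    by (simp only: poly_smult poly_mult poly_power poly_prod pl gen[OF u] diff_Suc_1)
qed

lemma deg_lin_pow: "degree ([:1, y:]^n) \<le> n"
proof -
  have "degree ([:1, y:]^n) \<le> degree [:1,y:] * n" by (rule degree_power_le)
  also have "\<dots> \<le> n" by simp
  finally show ?thesis .
qed

lemma P_deg:
  assumes fin: "finite A" and D: "\<forall>a\<in>A. D a \<ge> 1" and ne: "A \<noteq> {}"
  shows "degree (Pp A X D S) + 1 \<le> (\<Sum>a\<in>A. D a)"
proof -
  have "degree (Pp A X D S) \<le> (\<Sum>a\<in>A. D a) - 1"
    unfolding Pp_def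
  proof (intro degree_sum_le fin)
    fix a assume a: "a \<in> A"
    have "degree (smult (X a * real (D a) * S a) ([:1, X a:]^(D a - 1) * (\<Prod>b\<in>A-{a}. [:1, X b:]^(D b))))
       \<le> degree ([:1, X a:]^(D a - 1) * (\<Prod>b\<in>A-{a}. [:1, X b:]^(D b)))" by (rule degree_smult_le)
    also have "\<dots> \<le> degree ([:1, X a:]^(D a - 1)) + degree (\<Prod>b\<in>A-{a}. [:1, X b:]^(D b))"
      by (rule degree_mult_le)
    also have "\<dots> \<le> (D a - 1) + (\<Sum>b\<in>A-{a}. D b)"
    proof (intro add_mono deg_lin_pow)
      have "degree (\<Prod>b\<in>A-{a}. [:1, X b:]^(D b)) \<le> (\<Sum>b\<in>A-{a}. degree ([:1, X b:]^(D b)))"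
        using degree_prod_sum_le[of "A-{a}" "\<lambda>b. [:1, X b:]^(D b)"] fin by (simp add: o_def)
      also have "\<dots> \<le> (\<Sum>b\<in>A-{a}. D b)" by (intro sum_mono deg_lin_pow)
      finally show "degree (\<Prod>b\<in>A-{a}. [:1, X b:]^(D b)) \<le> (\<Sum>b\<in>A-{a}. D b)" .
    qed
    also have "\<dots> = (\<Sum>a\<in>A. D a) - 1"
      using fin a D sum.remove[OF fin a, of D] by auto
    finally show "degree (smult (X a * real (D a) * S a) ([:1, X a:]^(D a - 1) * (\<Prod>b\<in>A-{a}. [:1, X b:]^(D b))))
       \<le> (\<Sum>a\<in>A. D a) - 1" .
  qed
  moreover obtain a where "a \<in> A" using ne by auto
  then have "(\<Sum>a\<in>A. D a) \<ge> 1" using D fin member_le_sum[of a A D] by fastforce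
  ultimately show ?thesis by simp
qed

lemma P_dec:
  assumes fin: "finite A" and D: "\<forall>a\<in>A. D a \<ge> 1" and a0: "a0 \<in> A"
  shows "\<exists>R. Pp A X D S = [:1, X a0:]^(D a0 - 1) * R \<and>
     (\<forall>t. 1 + X a0 * t = 0 \<longrightarrow> poly R t = X a0 * real (D a0) * S a0 * (\<Prod>b\<in>A-{a0}. (1 + X b * t)^(D b)))"
proof -
  define T where "T a = smult (X a * real (D a) * S a) ([:1, X a:]^(D a - 1) * (\<Prod>b\<in>A-{a}. [:1, X b:]^(D b)))" for a
  define R where "R = smult (X a0 * real (D a0) * S a0) (\<Prod>b\<in>A-{a0}. [:1, X b:]^(D b))
     + [:1, X a0:] * (\<Sum>a\<in>A-{a0}. smult (X a * real (D a) * S a) ([:1, X a:]^(D a - 1) * (\<Prod>b\<in>A-{a}-{a0}. [:1, X b:]^(D b))))"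
  obtain m where m: "D a0 = Suc m" using D a0 by (cases "D a0") auto
  have "Pp A X D S = T a0 + (\<Sum>a\<in>A-{a0}. T a)"
    unfolding Pp_def T_def using fin a0 by (simp add: sum.remove)
  also have "T a0 = [:1, X a0:]^(D a0 - 1) * smult (X a0 * real (D a0) * S a0) (\<Prod>b\<in>A-{a0}. [:1, X b:]^(D b))"
    unfolding T_def by (simp add: mult_smult_right)
  also have "(\<Sum>a\<in>A-{a0}. T a) = [:1, X a0:]^(D a0 - 1) * ([:1, X a0:] * (\<Sum>a\<in>A-{a0}. smult (X a * real (D a) * S a) ([:1, X a:]^(D a - 1) * (\<Prod>b\<in>A-{a}-{a0}. [:1, X b:]^(D b)))))"
    unfolding sum_distrib_left
  proof (intro sum.cong refl)
    fix a assume a: "a \<in> A - {a0}"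
    have "(\<Prod>b\<in>A-{a}. [:1, X b:]^(D b)) = [:1, X a0:]^(D a0) * (\<Prod>b\<in>A-{a}-{a0}. [:1, X b:]^(D b))"
      using fin a a0 by (subst prod.remove[of _ a0]) auto
    then show "T a = [:1, X a0:]^(D a0 - 1) * ([:1, X a0:] * smult (X a * real (D a) * S a) ([:1, X a:]^(D a - 1) * (\<Prod>b\<in>A-{a}-{a0}. [:1, X b:]^(D b))))"
      unfolding T_def m by (simp add: mult_smult_right algebra_simps)
  qed
  finally have "Pp A X D S = [:1, X a0:]^(D a0 - 1) * R"
    unfolding R_def by (simp add: distrib_left)
  moreover have "poly R t = X a0 * real (D a0) * S a0 * (\<Prod>b\<in>A-{a0}. (1 + X b * t)^(D b))"
    if "1 + X a0 * t = 0" for t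
    unfolding R_def using that
    by (simp only: poly_add poly_smult poly_mult poly_power poly_prod pl poly_sum)
  ultimately show ?thesis by blast
qed


theorem lemmaA3:
  fixes I d0 dinf l :: nat and d :: "nat \<Rightarrow> nat" and x s :: "nat \<Rightarrow> real"
  assumes "I \<ge> 1"
    and "\<forall>a\<in>{1..I}. d a \<ge> 1"
    and "\<forall>a\<in>{1..I}. 0 < \<bar>x a\<bar> \<and> \<bar>x a\<bar> < 1"
    and "l \<ge> mdim I d d0 dinf"
  shows "(\<exists>g0 U. open U \<and> 1 \<in> U \<and> smooth_on U g0 \<and> g0 1 > 0 \<and>
            (\<exists>err V. open V \<and> 0 \<in> V \<and> smooth_on V err \<and> err 0 = 0 \<and>
              (\<exists>\<epsilon>>0. \<forall>c. 1 - \<epsilon> < c \<and> c < 1 \<longrightarrow>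
                 beta I d d0 dinf x s 0 (- int l) c = (g0 c + err (1 - c)) / (1 - c) ^ (l - d0))))
       \<and> (\<exists>gInf U. open U \<and> -1 \<in> U \<and> smooth_on U gInf \<and> gInf (-1) > 0 \<and>
            (\<exists>err V. open V \<and> 0 \<in> V \<and> smooth_on V err \<and> err 0 = 0 \<and>
              (\<exists>\<epsilon>>0. \<forall>c. -1 < c \<and> c < -1 + \<epsilon> \<longrightarrow>
                 beta I d d0 dinf x s 0 (- int l) c = (gInf c + err (1 + c)) / (1 + c) ^ (l - dinf))))"
proof -
  define A where "A = hatA I d0 dinf"
  define X where "X = xh x"
  define Dg where "Dg = dh d d0 dinf"
  define S where "S = sh s d0 dinf"
  have memA: "a \<in> A \<longleftrightarrow> (case a of Idx i \<Rightarrow> i \<in> {1..I} | Zero \<Rightarrow> 0 < d0 | Infty \<Rightarrow> 0 < dinf)" for a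
    unfolding A_def hatA_def by (cases a) auto
  have finA: "finite A" unfolding A_def hatA_def by auto
  have Dpos: "\<forall>a\<in>A. Dg a \<ge> 1"
  proof
    fix a assume "a \<in> A"
    then show "Dg a \<ge> 1" using assms(2) by (cases a) (auto simp: memA Dg_def)
  qed
  have neA: "A \<noteq> {}" using memA[of "Idx 1"] assms(1) by auto
  have Xabs: "\<bar>X a\<bar> \<le> 1" if "a \<in> A" for a
    using that assms(3) by (cases a) (force simp: memA X_def)+
  have Xlt: "\<bar>X a\<bar> < 1" if "a \<in> A" "a \<noteq> Zero" "a \<noteq> Infty" for a
    using that assms(3) by (cases a) (auto simp: memA X_def)
  have pos: "1 + X a * t > 0" if "a \<in> A" "-1 < t" "t < 1" for a t
  proof -
    have "\<bar>X a * t\<bar> \<le> \<bar>t\<bar>" unfolding abs_mult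
      using Xabs[OF that(1)] by (intro mult_left_le_one_le) auto
    also have "\<bar>t\<bar> < 1" using that by auto
    finally show ?thesis by linarith
  qed
  have mdim: "mdim I d d0 dinf = (\<Sum>a\<in>A. Dg a) + 1" unfolding mdim_def A_def Dg_def ..
  define P where "P = Pp A X Dg S"
  have degP: "degree P + 2 \<le> l" using P_deg[OF finA Dpos neA, of X S] assms(4) mdim unfolding P_def by simp
  have pc_eq: "pc I d d0 dinf x t = (\<Prod>a\<in>A. (1 + X a * t)^(Dg a))" for t
    unfolding pc_def A_def X_def Dg_def ..
  define pc' where "pc' = pc I d d0 dinf x"
  have beta_eq: "beta I d d0 dinf x s 0 (- int l) c = integral {-1..1} (\<lambda>t. poly P t * (c*t+1) powi (- int l))
      + ((1-c) powi (-int l) * pc' (-1) + (1+c) powi (-int l) * pc' 1)" for c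
  proof -
    have "integral {-1..1} (\<lambda>t. (\<Sum>a\<in>hatA I d0 dinf.
          xh x a * real (dh d d0 dinf a) * sh s d0 dinf a / (1 + xh x a * t))
        * pc I d d0 dinf x t * t ^ 0 * (c * t + 1) powi (- int l))
       = integral {-1..1} (\<lambda>t. poly P t * (c*t+1) powi (- int l))"
    proof (rule integral_spike[of "{-1,1}"])
      show "negligible {-1, 1::real}" by simp
      fix t assume t: "t \<in> {-1..1} - {-1, 1::real}"
      then have t': "-1 < t" "t < 1" by auto
      have "(\<Sum>a\<in>A. X a * real (Dg a) * S a / (1 + X a * t)) * (\<Prod>a\<in>A. (1 + X a * t)^(Dg a)) = poly P t"
        unfolding P_def using finA Dpos pos[OF _ t'] by (intro P_eval) (auto simp: less_le)
      then show "poly P t * (c*t+1) powi (- int l) = (\<Sum>a\<in>hatA I d0 dinf.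
          xh x a * real (dh d d0 dinf a) * sh s d0 dinf a / (1 + xh x a * t))
        * pc I d d0 dinf x t * t ^ 0 * (c * t + 1) powi (- int l)"
        unfolding pc_eq by (simp add: A_def X_def Dg_def S_def)
    qed
    then show ?thesis unfolding beta_def pc'_def by simp
  qed
  have pc'_eq: "pc' t = (\<Prod>a\<in>A. (1 + X a * t)^(Dg a))" for t unfolding pc'_def pc_eq ..
  have XZ: "X Zero = 1" "Dg Zero = d0" "S Zero = real d0 + 1" by (simp_all add: X_def Dg_def S_def)
  have XI: "X Infty = -1" "Dg Infty = dinf" "S Infty = - (real dinf + 1)" by (simp_all add: X_def Dg_def S_def)
  have sumge: "Dg a \<le> (\<Sum>a\<in>A. Dg a)" if "a \<in> A" for a using member_le_sum[OF that _ finA, of Dg] by simp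
  have side1: "\<exists>g0 U. open U \<and> 1 \<in> U \<and> smooth_on U g0 \<and> g0 1 > 0 \<and>
            (\<exists>err V. open V \<and> 0 \<in> V \<and> smooth_on V err \<and> err 0 = 0 \<and>
              (\<exists>\<epsilon>>0. \<forall>c. 1 - \<epsilon> < c \<and> c < 1 \<longrightarrow>
                 beta I d d0 dinf x s 0 (- int l) c = (g0 c + err (1 - c)) / (1 - c) ^ (l - d0)))"
  proof -
    obtain R0 where R0: "\<And>t. poly P t = (1+t)^(d0-1) * poly R0 t" "degree R0 + (d0-1) + 2 \<le> l"
        "0 < d0 \<Longrightarrow> poly R0 (-1) > 0"
    proof (cases "d0 = 0")
      case True
      then show thesis by (intro that[of P]) (use degP in simp_all)
    next
      case False
      have Z: "Zero \<in> A" using False memA[of Zero] by simp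
      obtain R where R: "P = [:1, X Zero:]^(Dg Zero - 1) * R"
        "\<And>t. 1 + X Zero * t = 0 \<Longrightarrow> poly R t = X Zero * real (Dg Zero) * S Zero * (\<Prod>b\<in>A-{Zero}. (1 + X b * t)^(Dg b))"
        using P_dec[OF finA Dpos Z, of X S] unfolding P_def by blast
      have "poly R (-1) = real d0 * (real d0 + 1) * (\<Prod>b\<in>A-{Zero}. (1 - X b)^(Dg b))"
        using R(2)[of "-1"] XZ by simp
      also have "\<dots> > 0"
      proof -
        have "1 - X b > 0" if "b \<in> A - {Zero}" for b
        proof (cases "b = Infty")
          case True thus ?thesis using XI by simp
        next
          case False
          then show ?thesis using Xlt[of b] that by (auto simp: abs_less_iff)
        qed
        then have "(\<Prod>b\<in>A-{Zero}. (1 - X b)^(Dg b)) > 0" by (intro prod_pos) auto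
        then show ?thesis using False by simp
      qed
      finally have Rp: "poly R (-1) > 0" .
      then have "R \<noteq> 0" by auto
      then have "degree P = (d0 - 1) + degree R" unfolding R(1) XZ
        by (subst degree_mult_eq) (auto simp: degree_power_eq)
      then show thesis using degP Rp by (intro that[of R]) (auto simp: R(1) XZ)
    qed
    have el: "d0 < l"
    proof (cases "d0 = 0")
      case True then show ?thesis using assms(4) mdim by simp
    next
      case False
      then have "Zero \<in> A" using memA[of Zero] by simp
      then have "d0 \<le> (\<Sum>a\<in>A. Dg a)" using sumge XZ by metis
      then show ?thesis using assms(4) mdim by simp
    qed
    have B0: "pc' (-1) > 0" if "d0 = 0"
    proof -
      have "1 + X a * (-1) > 0" if "a \<in> A" for a
      proof (cases "a = Infty")
        case True thus ?thesis using XI by simp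
      next
        case False
        have nZ: "a \<noteq> Zero" using that memA[of Zero] \<open>d0 = 0\<close> by auto
        show ?thesis using Xlt[OF that nZ False] by (simp add: abs_less_iff)
      qed
      then show ?thesis unfolding pc'_eq by (intro prod_pos) auto
    qed
    have B1: "pc' (-1) = 0" if "0 < d0"
    proof -
      have "Zero \<in> A" using memA[of Zero] that by simp
      then show ?thesis unfolding pc'_eq using finA XZ that by (subst prod_zero_iff) auto
    qed
    obtain g U where gU: "open U" "1 \<in> U" "smooth_on U g" "g 1 > 0"
      "\<And>c. 0 < c \<and> c < 1 \<Longrightarrow> integral {-1..1} (\<lambda>t. (1+t)^(d0-1) * poly R0 t * (c*t+1) powi (-int l))
       + ((1-c) powi (-int l) * pc' (-1) + (1+c) powi (-int l) * pc' 1) = g c / (1-c)^(l-d0)"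
      using core[OF R0(2) el B0 B1 R0(3), of "pc' 1"] by blast
    show ?thesis
    proof (rule exI[of _ g], rule exI[of _ U], intro conjI gU(1-4) exI[of _ "\<lambda>_. 0"] exI[of _ UNIV] exI[of _ "1::real"] allI impI)
      show "smooth_on UNIV (\<lambda>_. 0)" by (rule smooth_zero)
      fix c :: real assume c: "1 - 1 < c \<and> c < 1"
      have "beta I d d0 dinf x s 0 (- int l) c = g c / (1-c)^(l-d0)"
        unfolding beta_eq R0(1) using gU(5)[of c] c by simp
      then show "beta I d d0 dinf x s 0 (- int l) c = (g c + 0) / (1 - c) ^ (l - d0)" by simp
    qed auto
  qed
  have side2: "\<exists>gInf U. open U \<and> -1 \<in> U \<and> smooth_on U gInf \<and> gInf (-1) > 0 \<and>
            (\<exists>err V. open V \<and> 0 \<in> V \<and> smooth_on V err \<and> err 0 = 0 \<and>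
              (\<exists>\<epsilon>>0. \<forall>c. -1 < c \<and> c < -1 + \<epsilon> \<longrightarrow>
                 beta I d d0 dinf x s 0 (- int l) c = (gInf c + err (1 + c)) / (1 + c) ^ (l - dinf)))"
  proof -
    obtain R1 where R1: "\<And>t. poly P t = (1-t)^(dinf-1) * poly R1 t" "degree R1 + (dinf-1) + 2 \<le> l"
        "0 < dinf \<Longrightarrow> poly R1 1 > 0"
    proof (cases "dinf = 0")
      case True
      then show thesis by (intro that[of P]) (use degP in simp_all)
    next
      case False
      have Z: "Infty \<in> A" using False memA[of Infty] by simp
      obtain R where R: "P = [:1, X Infty:]^(Dg Infty - 1) * R"
        "\<And>t. 1 + X Infty * t = 0 \<Longrightarrow> poly R t = X Infty * real (Dg Infty) * S Infty * (\<Prod>b\<in>A-{Infty}. (1 + X b * t)^(Dg b))"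
        using P_dec[OF finA Dpos Z, of X S] unfolding P_def by blast
      have "poly R 1 = real dinf * (real dinf + 1) * (\<Prod>b\<in>A-{Infty}. (1 + X b)^(Dg b))"
        using R(2)[of 1] XI by (simp add: algebra_simps)
      also have "\<dots> > 0"
      proof -
        have "1 + X b > 0" if "b \<in> A - {Infty}" for b
        proof (cases "b = Zero")
          case True thus ?thesis using XZ by simp
        next
          case False
          then show ?thesis using Xlt[of b] that by (auto simp: abs_less_iff)
        qed
        then have "(\<Prod>b\<in>A-{Infty}. (1 + X b)^(Dg b)) > 0" by (intro prod_pos) auto
        then show ?thesis using False by simp
      qed
      finally have Rp: "poly R 1 > 0" .
      then have "R \<noteq> 0" by auto
      then have "degree P = (dinf - 1) + degree R" unfolding R(1) XI
        by (subst degree_mult_eq) (auto simp: degree_power_eq)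
      then show thesis using degP Rp by (intro that[of R]) (auto simp: R(1) XI)
    qed
    define R1' where "R1' = pcompose R1 [:0,-1:]"
    have R1'e: "poly R1' t = poly R1 (-t)" for t unfolding R1'_def by (simp add: poly_pcompose)
    have R1'd: "degree R1' = degree R1" unfolding R1'_def by (simp add: degree_pcompose)
    have el: "dinf < l"
    proof (cases "dinf = 0")
      case True then show ?thesis using assms(4) mdim by simp
    next
      case False
      then have "Infty \<in> A" using memA[of Infty] by simp
      then have "dinf \<le> (\<Sum>a\<in>A. Dg a)" using sumge XI by metis
      then show ?thesis using assms(4) mdim by simp
    qed
    have B0: "pc' 1 > 0" if "dinf = 0"
    proof -
      have "1 + X a * 1 > 0" if "a \<in> A" for a
      proof (cases "a = Zero")
        case True thus ?thesis using XZ by simp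
      next
        case False
        have nI: "a \<noteq> Infty" using that memA[of Infty] \<open>dinf = 0\<close> by auto
        show ?thesis using Xlt[OF that False nI] by (simp add: abs_less_iff)
      qed
      then show ?thesis unfolding pc'_eq by (intro prod_pos) auto
    qed
    have B1: "pc' 1 = 0" if "0 < dinf"
    proof -
      have "Infty \<in> A" using memA[of Infty] that by simp
      then show ?thesis unfolding pc'_eq using finA XI that by (subst prod_zero_iff) (auto intro!: bexI[of _ Infty])
    qed
    have R1'p: "0 < dinf \<Longrightarrow> poly R1' (-1) > 0" using R1(3) by (simp add: R1'e)
    obtain g U where gU: "open U" "1 \<in> U" "smooth_on U g" "g 1 > 0"
      "\<And>c. 0 < c \<and> c < 1 \<Longrightarrow> integral {-1..1} (\<lambda>t. (1+t)^(dinf-1) * poly R1' t * (c*t+1) powi (-int l))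
       + ((1-c) powi (-int l) * pc' 1 + (1+c) powi (-int l) * pc' (-1)) = g c / (1-c)^(l-dinf)"
      using core[of R1' dinf l "pc' 1" "pc' (-1)"] R1(2) el B0 B1 R1'p unfolding R1'd by blast
    show ?thesis
    proof (rule exI[of _ "\<lambda>c. g (-c)"], rule exI[of _ "uminus ` U"], intro conjI exI[of _ "\<lambda>_. 0"] exI[of _ UNIV] exI[of _ "1::real"] allI impI)
      show "open (uminus ` U)" using gU(1) by (simp add: open_negations)
      show "-1 \<in> uminus ` U" using gU(2) by force
      show "smooth_on (uminus ` U) (\<lambda>c. g (- c))" using gU(3) by (rule smooth_neg)
      show "g (- (-1)) > 0" using gU(4) by simp
      show "smooth_on UNIV (\<lambda>_. 0)" by (rule smooth_zero)
      fix c :: real assume c: "-1 < c \<and> c < -1 + 1"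
      have refl: "integral {-1..1} (\<lambda>t. poly P t * (c*t+1) powi (- int l))
          = integral {-1..1} (\<lambda>t. poly P (-t) * (c*(-t)+1) powi (- int l))"
        using Henstock_Kurzweil_Integration.integral_reflect_real[of 1 "-1" "\<lambda>t. poly P t * (c*t+1) powi (- int l)"]
        by simp
      also have "\<dots> = integral {-1..1} (\<lambda>t. (1+t)^(dinf-1) * poly R1' t * ((-c)*t+1) powi (-int l))"
        by (simp add: R1(1) R1'e)
      finally have "beta I d d0 dinf x s 0 (- int l) c
          = integral {-1..1} (\<lambda>t. (1+t)^(dinf-1) * poly R1' t * ((-c)*t+1) powi (-int l))
           + ((1-(-c)) powi (-int l) * pc' 1 + (1+(-c)) powi (-int l) * pc' (-1))"
        unfolding beta_eq by simp
      also have "\<dots> = g (-c) / (1-(-c))^(l-dinf)" using gU(5)[of "-c"] c by simp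
      finally show "beta I d d0 dinf x s 0 (- int l) c = (g (-c) + 0) / (1 + c) ^ (l - dinf)" by simp
    qed auto
  qed
  show ?thesis using side1 side2 by blast
qed

end
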